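(* Let $I$ be a $P$-interval of $\mathcal{P}$ with $|I|\geq 2$ and $D(I)=\{x_1,\ldots,x_r\}$. Then $I$ is a $b$-nested common interval if and only if there is some $i$ with $1\leq i\leq r$ such that $Int(x_i)$ is a $b$-nested common interval of size at least $|I|-b$.
   Context: Let $n\geq 1$, $K\geq 1$ and let $\mathcal{P}=\{P_1,\ldots,P_K\}$ be permutations of $\{1,\ldots,n\}$ with $P_1=(1,2,\ldots,n)$. For integers $i\leq j$ write $(i..j)=\{i,\ldots,j\}$. A common interval of $\mathcal{P}$ is a set of integers occupying consecutive positions in every $P_k$; all have the form $(i..j)$, and singletons and $(1..n)$ are common. Fix a positive integer $b$. A common interval $I$ is $b$-small if $|I|\leq b$, $b$-large otherwise; it is $b$-nested if $|I|=1$ or $I$ strictly contains a $b$-nested common interval $J$ with $|J|\geq|I|-b$ (recursive on size). Two intervals $(i..j)$, $(k..l)$ overlap if $i<k\leq j<l$ or $k<i\leq l<j$. A common interval is strong if it overlaps no other common interval. The PQ-tree $T$: nodes are the strong common intervals ($Int(x)$ is the interval of node $x$), root $(1..n)$, leaves the singletons, parent of $y$ is the node whose interval is the smallest strong common interval strictly containing $Int(y)$. A node $x$ with children set $D$ is a $P$-node if no union $\bigcup_{z\in D'}Int(z)$, $D'\subset D$, $2\leq|D'|<|D|$, is common; otherwise it is a $Q$-node with children ordered $y_1,\ldots,y_r$ so that $\max Int(y_i)+1=\min Int(y_{i+1})$. It is known that a set is a common interval iff it is $Int(x)$ for a node $x$ or the union of the intervals of consecutive children of a unique $Q$-node. The domain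 $D(I)$ of a common interval $I$ is the set of children of $x$ if $I=Int(x)$ is strong, and otherwise the set of consecutive children of the $Q$-node whose intervals have union $I$. A $P$-interval is a strong common interval $Int(x)$ with $x$ a $P$-node; all other common intervals are $Q$-intervals. *)

theory Defs
  imports Main
begin

definition is_perm :: "nat \<Rightarrow> nat list \<Rightarrow> bool" where
  "is_perm n p \<longleftrightarrow> distinct p \<and> set p = {1..n}"

definition valid_family :: "nat \<Rightarrow> nat list list \<Rightarrow> bool" where
  "valid_family n Ps \<longleftrightarrow> Ps \<noteq> [] \<and> hd Ps = [1..<n+1] \<and> (\<forall>p\<in>set Ps. is_perm n p)"

definition consec :: "nat list \<Rightarrow> nat set \<Rightarrow> bool" where
  "consec p S \<longleftrightarrow> (\<exists>i j. i \<le> j \<and> j < length p \<and> S = (\<lambda>k. p ! k) ` {i..j})"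

definition common :: "nat list list \<Rightarrow> nat set \<Rightarrow> bool" where
  "common Ps S \<longleftrightarrow> (\<forall>p\<in>set Ps. consec p S)"

definition overlap :: "nat set \<Rightarrow> nat set \<Rightarrow> bool" where
  "overlap A B \<longleftrightarrow>
     (Min A < Min B \<and> Min B \<le> Max A \<and> Max A < Max B) \<or>
     (Min B < Min A \<and> Min A \<le> Max B \<and> Max B < Max A)"

definition strong :: "nat list list \<Rightarrow> nat set \<Rightarrow> bool" where
  "strong Ps S \<longleftrightarrow> common Ps S \<and> (\<forall>T. common Ps T \<longrightarrow> \<not> overlap S T)"

text \<open>PQ-tree: nodes are identified with their (strong) intervals; y is a child of x iff
 x is the smallest strong interval strictly containing y.\<close>
definition children :: "nat list list \<Rightarrow> nat set \<Rightarrow> nat set set" where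
  "children Ps X = {Y. strong Ps Y \<and> Y \<subset> X \<and>
      (\<forall>Z. strong Ps Z \<and> Y \<subset> Z \<longrightarrow> X \<subseteq> Z)}"

definition P_node :: "nat list list \<Rightarrow> nat set \<Rightarrow> bool" where
  "P_node Ps X \<longleftrightarrow> strong Ps X \<and>
     (\<forall>D'. D' \<subset> children Ps X \<and> 2 \<le> card D' \<longrightarrow> \<not> common Ps (\<Union>D'))"

definition P_interval :: "nat list list \<Rightarrow> nat set \<Rightarrow> bool" where
  "P_interval Ps I \<longleftrightarrow> strong Ps I \<and> P_node Ps I"

inductive nested :: "nat list list \<Rightarrow> nat \<Rightarrow> nat set \<Rightarrow> bool" for Ps b where
  single: "common Ps I \<Longrightarrow> card I = 1 \<Longrightarrow> nested Ps b I"
| step: "common Ps I \<Longrightarrow> nested Ps b J \<Longrightarrow> J \<subset> I \<Longrightarrow> card I \<le> card J + b \<Longrightarrow> nested Ps b I"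

end

theory Submission
  imports Defs
begin

lemma common_interval:
  assumes "valid_family n Ps" "common Ps S"
  shows "\<exists>a c. a \<le> c \<and> S = {a..c} \<and> S \<subseteq> {1..n}"
proof -
  have "Ps \<noteq> []" using assms(1) unfolding valid_family_def by blast
  hence h: "hd Ps \<in> set Ps" by (rule hd_in_set)
  have "consec [1..<n+1] S" using assms h unfolding common_def valid_family_def by metis
  then obtain i j where ij0: "i \<le> j" "j < length [1..<n+1]" "S = (\<lambda>k. [1..<n+1] ! k) ` {i..j}"
    unfolding consec_def by blast
  have "length [1..<n+1] = n" by simp
  hence ij: "i \<le> j" "j < n" "S = (\<lambda>k. [1..<n+1] ! k) ` {i..j}" using ij0 by auto
  have "S = Suc ` {i..j}" unfolding ij(3) using ij(2) by (intro image_cong) (auto simp del: upt_Suc simp: nth_upt)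
  also have "\<dots> = {Suc i..Suc j}" by (simp add: image_Suc_atLeastAtMost)
  finally show ?thesis using ij by (intro exI[of _ "Suc i"] exI[of _ "Suc j"]) auto
qed

lemma laminar:
  assumes "valid_family n Ps" "common Ps A" "common Ps B" "A \<inter> B \<noteq> {}" "\<not> overlap A B"
  shows "A \<subseteq> B \<or> B \<subseteq> A"
proof -
  obtain a c where A: "a \<le> c" "A = {a..c}" using common_interval[OF assms(1,2)] by blast
  obtain a' c' where B: "a' \<le> c'" "B = {a'..c'}" using common_interval[OF assms(1,3)] by blast
  have mm: "Min A = a" "Max A = c" "Min B = a'" "Max B = c'" using A B
    by (auto intro!: Min_eqI Max_eqI)
  have no: "\<not> (a < a' \<and> a' \<le> c \<and> c < c')" "\<not> (a' < a \<and> a \<le> c' \<and> c' < c)"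
    using assms(5) unfolding overlap_def mm by auto
  obtain y where "y \<in> A" "y \<in> B" using assms(4) by auto
  hence "a \<le> y" "y \<le> c" "a' \<le> y" "y \<le> c'" using A B by auto
  hence "(a' \<le> a \<and> c \<le> c') \<or> (a \<le> a' \<and> c' \<le> c)" using no by linarith
  thus ?thesis using A B by auto
qed

lemma common_finite:
  assumes "valid_family n Ps" "common Ps S"
  shows "finite S \<and> S \<noteq> {}"
  using common_interval[OF assms] by auto

lemma strong_no_overlap:
  assumes "strong Ps A" "common Ps B" shows "\<not> overlap A B" "\<not> overlap B A"
  using assms unfolding strong_def overlap_def by blast+

lemma singleton_strong:
  assumes "valid_family n Ps" "x \<in> {1..n}" shows "strong Ps {x}"
proof -
  have "common Ps {x}" unfolding common_def consec_def
  proof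
    fix p assume "p \<in> set Ps"
    hence "is_perm n p" using assms(1) unfolding valid_family_def by auto
    hence "x \<in> set p" using assms(2) unfolding is_perm_def by auto
    then obtain k where "k < length p" "p ! k = x" by (auto simp: in_set_conv_nth)
    thus "\<exists>i j. i \<le> j \<and> j < length p \<and> {x} = (!) p ` {i..j}"
      by (intro exI[of _ k] exI[of _ k]) auto
  qed
  thus ?thesis unfolding strong_def overlap_def by auto
qed

lemma child_exists:
  assumes vf: "valid_family n Ps" and sI: "strong Ps I" and cI: "card I \<ge> 2" and x: "x \<in> I"
  shows "\<exists>Y\<in>children Ps I. x \<in> Y"
proof -
  have cmI: "common Ps I" using sI strong_def by auto
  obtain a c where I: "a \<le> c" "I = {a..c}" "I \<subseteq> {1..n}" using common_interval[OF vf cmI] by blast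
  have fI: "finite I" using I by simp
  define C where "C = {Y. strong Ps Y \<and> x \<in> Y \<and> Y \<subset> I}"
  have fC: "finite C" using fI unfolding C_def by (rule rev_finite_subset[OF finite_Pow_iff[THEN iffD2]]) auto
  have xC: "{x} \<in> C"
  proof -
    have "I \<noteq> {x}" using cI by auto
    thus ?thesis unfolding C_def using singleton_strong[OF vf, of x] x I(3) by auto
  qed
  define m where "m = Max (card ` C)"
  have "m \<in> card ` C" unfolding m_def using fC xC by (intro Max_in) auto
  then obtain Y where Y: "Y \<in> C" "card Y = m" by auto
  have mx: "\<And>Z. Z \<in> C \<Longrightarrow> card Z \<le> card Y" using Y fC unfolding m_def by auto
  have "Y \<in> children Ps I" unfolding children_def
  proof (intro CollectI conjI allI impI)
    show "strong Ps Y" "Y \<subset> I" using Y C_def by auto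
    fix Z assume Z: "strong Ps Z \<and> Y \<subset> Z"
    have "Z \<inter> I \<noteq> {}" using Z Y x C_def by auto
    hence "Z \<subseteq> I \<or> I \<subseteq> Z"
      using laminar[OF vf _ cmI] strong_no_overlap[OF sI] Z unfolding strong_def by blast
    moreover have "\<not> Z \<subset> I"
    proof
      assume "Z \<subset> I"
      hence "Z \<in> C" using Z Y unfolding C_def by auto
      hence "card Z \<le> card Y" by (rule mx)
      moreover have "card Y < card Z" using Z fI \<open>Z \<subset> I\<close> by (meson psubset_card_mono rev_finite_subset psubset_imp_subset)
      ultimately show False by simp
    qed
    ultimately show "I \<subseteq> Z" by auto
  qed
  thus ?thesis using Y C_def by auto
qed

lemma nested_common: "nested Ps b J \<Longrightarrow> common Ps J"
  by (induction rule: nested.induct) auto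

theorem lemma2:
  fixes n b :: nat and Ps :: "nat list list" and I :: "nat set"
  assumes "n \<ge> 1" and "b \<ge> 1" and "valid_family n Ps"
    and "P_interval Ps I" and "card I \<ge> 2"
  shows "nested Ps b I \<longleftrightarrow> (\<exists>X\<in>children Ps I. nested Ps b X \<and> card I \<le> card X + b)"
proof
  have sI: "strong Ps I" and PI: "P_node Ps I" using assms(4) unfolding P_interval_def by auto
  have cmI: "common Ps I" using sI strong_def by auto
  have fI: "finite I" using common_finite[OF assms(3) cmI] by auto
  assume "nested Ps b I"
  then obtain J where J: "nested Ps b J" "J \<subset> I" "card I \<le> card J + b"
    using assms(5) by (cases rule: nested.cases) auto
  have cJ: "common Ps J" using J(1) nested_common by auto
  have neJ: "J \<noteq> {}" using common_finite[OF assms(3) cJ] by auto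
  show "\<exists>X\<in>children Ps I. nested Ps b X \<and> card I \<le> card X + b"
  proof (cases "\<exists>Y\<in>children Ps I. J \<subseteq> Y")
    case True
    then obtain Y where Y: "Y \<in> children Ps I" "J \<subseteq> Y" by auto
    have sY: "strong Ps Y" "Y \<subset> I" using Y(1) children_def by auto
    have fY: "finite Y" using sY fI by (meson psubset_imp_subset rev_finite_subset)
    have cle: "card J \<le> card Y" "card Y \<le> card I" using Y(2) sY fY fI
      by (auto intro: card_mono)
    have "nested Ps b Y"
    proof (cases "J = Y")
      case True thus ?thesis using J by simp
    next
      case False
      thus ?thesis using nested.step[of Ps Y b J] sY J cle Y(2) unfolding strong_def by auto
    qed
    thus ?thesis using Y cle J by (intro bexI[of _ Y]) auto
  next
    case False
    define D where "D = {Y\<in>children Ps I. Y \<inter> J \<noteq> {}}"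
    have DJ: "\<And>Y. Y \<in> D \<Longrightarrow> Y \<subseteq> J"
    proof -
      fix Y assume "Y \<in> D"
      hence Y: "Y \<in> children Ps I" "Y \<inter> J \<noteq> {}" unfolding D_def by auto
      hence sY: "strong Ps Y" unfolding children_def by auto
      have "Y \<subseteq> J \<or> J \<subseteq> Y"
        using laminar[OF assms(3) _ cJ Y(2)] strong_no_overlap(1)[OF sY cJ] sY strong_def by blast
      thus "Y \<subseteq> J" using False Y by auto
    qed
    have UD: "\<Union>D = J"
    proof
      show "\<Union>D \<subseteq> J" using DJ by auto
      show "J \<subseteq> \<Union>D"
      proof
        fix x assume "x \<in> J"
        then obtain Y where "Y \<in> children Ps I" "x \<in> Y"
          using child_exists[OF assms(3) sI assms(5), of x] J(2) by auto
        thus "x \<in> \<Union>D" using \<open>x \<in> J\<close> unfolding D_def by auto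
      qed
    qed
    have chI: "\<Union>(children Ps I) = I"
    proof
      show "\<Union>(children Ps I) \<subseteq> I" unfolding children_def by auto
      show "I \<subseteq> \<Union>(children Ps I)" using child_exists[OF assms(3) sI assms(5)] by auto
    qed
    have Dsub: "D \<subset> children Ps I"
    proof -
      have "D \<subseteq> children Ps I" unfolding D_def by auto
      moreover have "D \<noteq> children Ps I" using UD chI J(2) by auto
      ultimately show ?thesis by auto
    qed
    have fD: "finite D"
    proof -
      have "D \<subseteq> Pow I" using Dsub unfolding children_def by auto
      thus ?thesis using fI by (meson finite_Pow_iff rev_finite_subset)
    qed
    have "card D \<ge> 2"
    proof (rule ccontr)
      assume "\<not> card D \<ge> 2"
      hence "card D \<le> 1" by simp
      moreover have "D \<noteq> {}" using UD neJ by auto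
      ultimately obtain Y where "D = {Y}" using fD
        by (metis One_nat_def card_0_eq card_1_singletonE le_Suc_eq le_zero_eq)
      hence "Y \<in> children Ps I" "J \<subseteq> Y" using UD D_def by auto
      thus False using False by auto
    qed
    hence "\<not> common Ps (\<Union>D)" using PI Dsub unfolding P_node_def by auto
    thus ?thesis using UD cJ by simp
  qed
next
  assume "\<exists>X\<in>children Ps I. nested Ps b X \<and> card I \<le> card X + b"
  then obtain X where X: "X \<in> children Ps I" "nested Ps b X" "card I \<le> card X + b" by auto
  have "common Ps I" using assms(4) unfolding P_interval_def strong_def by auto
  moreover have "X \<subset> I" using X(1) children_def by auto
  ultimately show "nested Ps b I" using nested.step X by blast
qed

end
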